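(* In the interpolating system described in the context, for any fixed $a>\epsilon>0$ (and fixed $t\in[0,1]$), $$\int_\epsilon^a du\;\mathbb E\bigl\langle|L(x)-\langle L(x)\rangle_{t,u}|\bigr\rangle_{t,u}=O\Bigl(\frac{1}{\sqrt K}\Bigr)\quad\text{as }K\to\infty .$$
   Context: Let $K,N$ with $K/N=\beta$ fixed, $\sigma^2>0$, $B=\sigma^{-2}$, $m\in[0,1]$, $\lambda=B/(1+\beta B(1-m))$; $B(t),\lambda(t)$ continuously differentiable on $[0,1]$ with $B(0)=0,\lambda(0)=\lambda,B(1)=B,\lambda(1)=0$, $B$ increasing, $\lambda$ decreasing, $\frac{B(t)}{1+\beta B(t)(1-m)}+\lambda(t)=\lambda$. Random data: $n\in\mathbb R^N$, $w,h\in\mathbb R^K$ i.i.d. $\mathcal N(0,1)$ entries, $N\times K$ matrix $s$ i.i.d. $\mathcal N(0,1)$, independent; $\mathbb E$ is expectation over them. For $x\in\{\pm1\}^K$: $z=\mathbf 1-x$, $h_u(x)=\sqrt u\sum_kh_kx_k+u\sum_kx_k-\sqrt u\sum_k|h_k|$; Gibbs measure $p_{t,u}(x)\propto\exp\bigl(-\frac12\|n+N^{-1/2}B(t)^{1/2}sz\|^2-\frac12\|w+\lambda(t)^{1/2}z\|^2+h_u(x)\bigr)$ with average $\langle\cdot\rangle_{t,u}$. $L(x)=\frac1K\frac{1}{2\sqrt u}\sum_kh_kx_k+\frac1K\sum_kx_k$. *)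

theory Defs
  imports "HOL-Probability.Probability"
begin

definition std_gauss :: "real measure" where
  "std_gauss = density lborel std_normal_density"

definition gauss_vec :: "nat \<Rightarrow> (nat \<Rightarrow> real) measure" where
  "gauss_vec n = PiM {..<n} (\<lambda>_. std_gauss)"

definition gauss_mat :: "nat \<Rightarrow> nat \<Rightarrow> (nat \<times> nat \<Rightarrow> real) measure" where
  "gauss_mat N K = PiM ({..<N} \<times> {..<K}) (\<lambda>_. std_gauss)"

definition data_measure :: "nat \<Rightarrow> nat \<Rightarrow>
    ((nat \<Rightarrow> real) \<times> (nat \<Rightarrow> real) \<times> (nat \<Rightarrow> real) \<times> (nat \<times> nat \<Rightarrow> real)) measure" where
  "data_measure K N = gauss_vec N \<Otimes>\<^sub>M (gauss_vec K \<Otimes>\<^sub>M (gauss_vec K \<Otimes>\<^sub>M gauss_mat N K))"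

definition configs :: "nat \<Rightarrow> (nat \<Rightarrow> real) set" where
  "configs K = {..<K} \<rightarrow>\<^sub>E {-1, 1}"

definition h_u :: "nat \<Rightarrow> real \<Rightarrow> (nat \<Rightarrow> real) \<Rightarrow> (nat \<Rightarrow> real) \<Rightarrow> real" where
  "h_u K u h x = sqrt u * (\<Sum>k<K. h k * x k) + u * (\<Sum>k<K. x k) - sqrt u * (\<Sum>k<K. \<bar>h k\<bar>)"

text \<open>Unnormalised Gibbs weight of p_{t,u}; Bt = B(t), lt = lambda(t), z = 1 - x.\<close>
definition gibbs_weight :: "nat \<Rightarrow> nat \<Rightarrow> real \<Rightarrow> real \<Rightarrow> real \<Rightarrow>
    (nat \<Rightarrow> real) \<Rightarrow> (nat \<Rightarrow> real) \<Rightarrow> (nat \<Rightarrow> real) \<Rightarrow> (nat \<times> nat \<Rightarrow> real) \<Rightarrow>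
    (nat \<Rightarrow> real) \<Rightarrow> real" where
  "gibbs_weight K N Bt lt u n w h s x =
     exp (- (1/2) * (\<Sum>i<N. (n i + sqrt Bt / sqrt (real N) * (\<Sum>k<K. s (i, k) * (1 - x k)))\<^sup>2)
          - (1/2) * (\<Sum>k<K. (w k + sqrt lt * (1 - x k))\<^sup>2)
          + h_u K u h x)"

definition gibbs_avg :: "nat \<Rightarrow> nat \<Rightarrow> real \<Rightarrow> real \<Rightarrow> real \<Rightarrow>
    (nat \<Rightarrow> real) \<Rightarrow> (nat \<Rightarrow> real) \<Rightarrow> (nat \<Rightarrow> real) \<Rightarrow> (nat \<times> nat \<Rightarrow> real) \<Rightarrow>
    ((nat \<Rightarrow> real) \<Rightarrow> real) \<Rightarrow> real" where
  "gibbs_avg K N Bt lt u n w h s f =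
     (\<Sum>x\<in>configs K. f x * gibbs_weight K N Bt lt u n w h s x)
     / (\<Sum>x\<in>configs K. gibbs_weight K N Bt lt u n w h s x)"

definition L_obs :: "nat \<Rightarrow> real \<Rightarrow> (nat \<Rightarrow> real) \<Rightarrow> (nat \<Rightarrow> real) \<Rightarrow> real" where
  "L_obs K u h x = (1 / real K) * (1 / (2 * sqrt u)) * (\<Sum>k<K. h k * x k) + (1 / real K) * (\<Sum>k<K. x k)"

definition fluct :: "nat \<Rightarrow> nat \<Rightarrow> real \<Rightarrow> real \<Rightarrow> real \<Rightarrow> real" where
  "fluct K N Bt lt u =
     integral\<^sup>L (data_measure K N) (\<lambda>(n, w, h, s).
        gibbs_avg K N Bt lt u n w h s
          (\<lambda>x. \<bar>L_obs K u h x - gibbs_avg K N Bt lt u n w h s (L_obs K u h)\<bar>))"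

definition C1_on :: "real set \<Rightarrow> (real \<Rightarrow> real) \<Rightarrow> bool" where
  "C1_on S f \<longleftrightarrow> (\<exists>f'. continuous_on S f' \<and> (\<forall>t\<in>S. (f has_real_derivative f' t) (at t within S)))"

end

theory Submission
  imports Defs
begin


lemma deriv_w:
  fixes A P Q S u :: real assumes u: "0 < u"
  shows "((\<lambda>u. exp (A + (sqrt u * P + u * Q - sqrt u * S))) has_real_derivative
     exp (A + (sqrt u * P + u * Q - sqrt u * S)) * (P / (2 * sqrt u) + Q - S / (2 * sqrt u))) (at u)"
  using u by (auto intro!: derivative_eq_intros simp: field_simps)

lemma deriv_wD:
  fixes A P Q S u :: real assumes u: "0 < u"
  shows "((\<lambda>u. exp (A + (sqrt u * P + u * Q - sqrt u * S)) * (P / (2 * sqrt u) + Q)) has_real_derivative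
     exp (A + (sqrt u * P + u * Q - sqrt u * S)) * (P / (2 * sqrt u) + Q - S / (2 * sqrt u)) * (P / (2 * sqrt u) + Q)
     + exp (A + (sqrt u * P + u * Q - sqrt u * S)) * (- P / (4 * u * sqrt u))) (at u)"
proof -
  have d: "((\<lambda>u. P / (2 * sqrt u) + Q) has_real_derivative - P / (4 * u * sqrt u)) (at u)"
    using u by (auto intro!: derivative_eq_intros simp: field_simps power2_eq_square)
  show ?thesis by (rule DERIV_cong[OF DERIV_mult[OF deriv_w[OF u] d]]) (simp add: algebra_simps)
qed

context
  fixes X :: "'a set" and A P Q :: "'a \<Rightarrow> real" and S :: real
  assumes finX: "finite X" and neX: "X \<noteq> {}"
begin

definition "ww u x = exp (A x + (sqrt u * P x + u * Q x - sqrt u * S))"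
definition "DD u x = P x / (2 * sqrt u) + Q x"
definition "ZZ u = (\<Sum>x\<in>X. ww u x)"
definition "YY u = (\<Sum>x\<in>X. ww u x * DD u x)"
definition "Y2 u = (\<Sum>x\<in>X. ww u x * DD u x * DD u x)"
definition "Yd u = (\<Sum>x\<in>X. ww u x * (- P x / (4 * u * sqrt u)))"
definition "Psi u = YY u / ZZ u - S / (2 * sqrt u)"
definition "Psi' u = Y2 u / ZZ u - (YY u / ZZ u)^2 + Yd u / ZZ u + S / (4 * u * sqrt u)"

lemma ZZ_pos: "ZZ u > 0"
  unfolding ZZ_def ww_def using finX neX by (intro sum_pos) auto

lemma deriv_Psi:
  assumes u: "0 < u"
  shows "(Psi has_real_derivative Psi' u) (at u)"
proof -
  define c where "c = S / (2 * sqrt u)"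
  have dZ: "(ZZ has_real_derivative (\<Sum>x\<in>X. ww u x * (DD u x - c))) (at u)"
    unfolding ZZ_def[abs_def] 
    by (rule DERIV_sum) (unfold ww_def DD_def c_def, rule deriv_w[OF u])
  have dY: "(YY has_real_derivative (\<Sum>x\<in>X. ww u x * (DD u x - c) * DD u x + ww u x * (- P x / (4 * u * sqrt u)))) (at u)"
    unfolding YY_def[abs_def] 
    by (rule DERIV_sum) (unfold ww_def DD_def c_def, rule deriv_wD[OF u])
  have dS: "((\<lambda>u. S / (2 * sqrt u)) has_real_derivative - S / (4 * u * sqrt u)) (at u)"
    using u by (auto intro!: derivative_eq_intros simp: field_simps power2_eq_square)
  have Z': "(\<Sum>x\<in>X. ww u x * (DD u x - c)) = YY u - c * ZZ u"
    by (simp add: YY_def ZZ_def algebra_simps sum_subtractf sum_distrib_left)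
  have Y': "(\<Sum>x\<in>X. ww u x * (DD u x - c) * DD u x + ww u x * (- P x / (4 * u * sqrt u))) = Y2 u - c * YY u + Yd u"
    by (simp add: YY_def Y2_def Yd_def algebra_simps sum_subtractf sum_distrib_left sum.distrib sum_negf)
  have Zn: "ZZ u \<noteq> 0" using ZZ_pos[of u] by simp
  have "(Psi has_real_derivative ((Y2 u - c * YY u + Yd u) * ZZ u - YY u * (YY u - c * ZZ u)) / (ZZ u * ZZ u) - (- S / (4 * u * sqrt u))) (at u)"
    unfolding Psi_def[abs_def] using DERIV_diff[OF DERIV_divide[OF dY dZ Zn] dS] by (simp only: Z' Y')
  moreover have "((Y2 u - c * YY u + Yd u) * ZZ u - YY u * (YY u - c * ZZ u)) / (ZZ u * ZZ u) - (- S / (4 * u * sqrt u)) = Psi' u"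
    unfolding Psi'_def using Zn by (simp add: field_simps power2_eq_square)
  ultimately show ?thesis by simp
qed

definition "avg u f = (\<Sum>x\<in>X. f x * ww u x) / ZZ u"

lemma avg_mono: "(\<And>x. x \<in> X \<Longrightarrow> f x \<le> g x) \<Longrightarrow> avg u f \<le> avg u g"
  unfolding avg_def using ZZ_pos[of u]
  by (intro divide_right_mono sum_mono mult_right_mono) (auto simp: ww_def)

lemma avg_add: "avg u (\<lambda>x. f x + g x) = avg u f + avg u g"
  unfolding avg_def by (simp add: sum.distrib distrib_right add_divide_distrib)

lemma avg_cmult: "avg u (\<lambda>x. c * f x) = c * avg u f"
  unfolding avg_def by (simp add: sum_distrib_left mult.assoc)

lemma avg_const: "avg u (\<lambda>x. c) = c"
  unfolding avg_def ZZ_def using ZZ_pos[of u] by (simp add: sum_distrib_left[symmetric] ZZ_def)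

lemma avg_abs_le: "(\<And>x. x \<in> X \<Longrightarrow> \<bar>f x\<bar> \<le> M) \<Longrightarrow> \<bar>avg u f\<bar> \<le> M"
proof -
  assume h: "\<And>x. x \<in> X \<Longrightarrow> \<bar>f x\<bar> \<le> M"
  have "avg u f \<le> avg u (\<lambda>x. M)" by (rule avg_mono) (use h in force)
  moreover have "avg u (\<lambda>x. - M) \<le> avg u f" by (rule avg_mono) (use h in force)
  ultimately show ?thesis by (simp add: avg_const)
qed

lemma YY_avg: "YY u / ZZ u = avg u (DD u)"
  unfolding YY_def avg_def by (simp add: mult.commute)

lemma var_le:
  assumes u: "0 < u" and PS: "\<And>x. x \<in> X \<Longrightarrow> P x \<le> S"
  shows "avg u (\<lambda>x. (DD u x - avg u (DD u))^2) \<le> Psi' u"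
proof -
  define m where "m = avg u (DD u)"
  have Zn: "ZZ u \<noteq> 0" using ZZ_pos[of u] by simp
  have "avg u (\<lambda>x. (DD u x - m)^2) = avg u (\<lambda>x. DD u x * DD u x + (-2*m) * DD u x + m^2)"
    by (simp add: power2_eq_square algebra_simps)
  also have "\<dots> = Y2 u / ZZ u - m^2"
  proof -
    have "avg u (\<lambda>x. DD u x * DD u x) = Y2 u / ZZ u"
      unfolding avg_def Y2_def by (simp add: mult.commute mult.left_commute)
    moreover have "avg u (DD u) = m" by (simp add: m_def)
    ultimately show ?thesis
      unfolding avg_add avg_cmult avg_const by (simp add: power2_eq_square)
  qed
  finally have v: "avg u (\<lambda>x. (DD u x - m)^2) = Y2 u / ZZ u - m^2" .
  have "Yd u / ZZ u + S / (4 * u * sqrt u) = avg u (\<lambda>x. (S - P x) / (4 * u * sqrt u))"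
  proof -
    have "avg u (\<lambda>x. (S - P x) / (4 * u * sqrt u)) = avg u (\<lambda>x. S / (4 * u * sqrt u) + (- P x / (4 * u * sqrt u)))"
      by (simp add: diff_divide_distrib)
    also have "\<dots> = S / (4 * u * sqrt u) + Yd u / ZZ u"
      unfolding avg_add avg_const by (simp add: avg_def Yd_def mult.commute)
    finally show ?thesis by simp
  qed
  moreover have "avg u (\<lambda>x. (S - P x) / (4 * u * sqrt u)) \<ge> avg u (\<lambda>x. 0)"
    by (rule avg_mono) (use PS u in auto)
  ultimately have "Yd u / ZZ u + S / (4 * u * sqrt u) \<ge> 0" by (simp add: avg_const)
  moreover have "Psi' u = Y2 u / ZZ u - m^2 + (Yd u / ZZ u + S / (4 * u * sqrt u))"
    unfolding Psi'_def YY_avg m_def by simp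
  ultimately show ?thesis using v unfolding m_def by linarith
qed

lemma Psi'_meas: "Psi' \<in> borel_measurable borel"
  unfolding Psi'_def[abs_def] Y2_def[abs_def] YY_def[abs_def] ZZ_def[abs_def] Yd_def[abs_def] ww_def[abs_def] DD_def[abs_def]
  by measurable

lemma core_integral:
  fixes k \<epsilon> a :: real
  assumes PS: "\<And>x. x \<in> X \<Longrightarrow> \<bar>P x\<bar> \<le> S" and Qk: "\<And>x. x \<in> X \<Longrightarrow> \<bar>Q x\<bar> \<le> k"
    and k: "0 < k" and eps: "0 < \<epsilon>" "\<epsilon> < a"
  shows "(\<integral>\<^sup>+u. ennreal (avg u (\<lambda>x. \<bar>((1/k)*(1/(2* sqrt u))*P x + (1/k)*Q x)
             - avg u (\<lambda>x. (1/k)*(1/(2* sqrt u))*P x + (1/k)*Q x)\<bar>)) * indicator {\<epsilon>..a} u \<partial>lborel)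
     \<le> ennreal ((2 + 3*S/(2*k* sqrt \<epsilon>) + (a-\<epsilon>))/(2* sqrt k))"
proof -
  have S0: "0 \<le> S" using PS neX by fastforce
  define f2 where "f2 u = Psi' u / (2*k* sqrt k) + 1/(2* sqrt k)" for u
  define F where "F u = Psi u / (2*k* sqrt k) + u/(2* sqrt k)" for u
  have sk: "sqrt k > 0" using k by simp
  have pt: "avg u (\<lambda>x. \<bar>((1/k)*(1/(2* sqrt u))*P x + (1/k)*Q x)
             - avg u (\<lambda>x. (1/k)*(1/(2* sqrt u))*P x + (1/k)*Q x)\<bar>) \<le> f2 u" if u: "0 < u" for u
  proof -
    define m where "m = avg u (DD u)"
    have L: "\<And>x. (1/k)*(1/(2* sqrt u))*P x + (1/k)*Q x = (1/k) * DD u x"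
      using k by (simp add: DD_def field_simps)
    have "avg u (\<lambda>x. \<bar>(1/k) * DD u x - (1/k) * m\<bar>) \<le> avg u (\<lambda>x. (1/(2*k* sqrt k)) * (DD u x - m)^2 + 1/(2* sqrt k))"
    proof (rule avg_mono)
      fix x
      define y where "y = DD u x - m"
      have "0 \<le> (\<bar>y\<bar> - sqrt k)^2" by simp
      hence "2 * sqrt k * \<bar>y\<bar> \<le> y^2 + k" using k by (simp add: power2_eq_square algebra_simps)
      hence "\<bar>y\<bar> / k \<le> (y^2 + k) / (2 * k * sqrt k)" using k sk
        by (simp add: field_simps)
      also have "\<dots> = (1/(2*k* sqrt k)) * y^2 + 1/(2* sqrt k)"
        using k sk by (simp add: field_simps)
      finally have fin: "\<bar>y\<bar> / k \<le> (1/(2*k* sqrt k)) * y^2 + 1/(2* sqrt k)" .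
      have "(1/k) * DD u x - (1/k) * m = (1/k) * y" unfolding y_def by (simp only: right_diff_distrib)
      then have "\<bar>(1/k) * DD u x - (1/k) * m\<bar> = \<bar>y\<bar> / k" using k by (simp add: abs_mult)
      then show "\<bar>(1/k) * DD u x - (1/k) * m\<bar> \<le> (1/(2*k* sqrt k)) * (DD u x - m)^2 + 1/(2* sqrt k)"
        using fin unfolding y_def by simp
    qed
    also have "\<dots> = (1/(2*k* sqrt k)) * avg u (\<lambda>x. (DD u x - m)^2) + 1/(2* sqrt k)"
      by (simp only: avg_add avg_cmult avg_const)
    also have "\<dots> \<le> (1/(2*k* sqrt k)) * Psi' u + 1/(2* sqrt k)"
      using var_le[OF u] PS k sk unfolding m_def by (intro add_right_mono mult_left_mono) (auto simp: abs_le_iff)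
    finally have "avg u (\<lambda>x. \<bar>(1/k) * DD u x - (1/k) * m\<bar>) \<le> (1/(2*k* sqrt k)) * Psi' u + 1/(2* sqrt k)" .
    moreover have "(1/(2*k* sqrt k)) * Psi' u + 1/(2* sqrt k) = f2 u" unfolding f2_def by simp
    ultimately have "avg u (\<lambda>x. \<bar>(1/k) * DD u x - (1/k) * m\<bar>) \<le> f2 u" by linarith
    then show ?thesis by (simp only: L avg_cmult m_def)
  qed
  have f2nn: "0 \<le> f2 u" if "u \<in> {\<epsilon>..a}" for u
  proof -
    have "0 \<le> avg u (\<lambda>x. (DD u x - avg u (DD u))^2)"
      using avg_mono[of "\<lambda>x. 0" "\<lambda>x. (DD u x - avg u (DD u))^2" u] by (simp add: avg_const)
    then have "0 \<le> Psi' u" using var_le[of u] that eps PS by (force simp: abs_le_iff)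
    then show ?thesis unfolding f2_def using k sk by simp
  qed
  have dF: "(F has_real_derivative f2 u) (at u)" if "u \<in> {\<epsilon>..a}" for u
  proof -
    have u: "0 < u" using that eps by simp
    show ?thesis unfolding F_def[abs_def] f2_def
      by (rule DERIV_cong[OF DERIV_add[OF DERIV_cdivide[OF deriv_Psi[OF u]] DERIV_cdivide[OF DERIV_ident]]]) simp
  qed
  have f2m: "f2 \<in> borel_measurable borel" unfolding f2_def[abs_def] using Psi'_meas by measurable
  have "(\<integral>\<^sup>+u. ennreal (avg u (\<lambda>x. \<bar>((1/k)*(1/(2* sqrt u))*P x + (1/k)*Q x)
             - avg u (\<lambda>x. (1/k)*(1/(2* sqrt u))*P x + (1/k)*Q x)\<bar>)) * indicator {\<epsilon>..a} u \<partial>lborel)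
     \<le> (\<integral>\<^sup>+u. ennreal (f2 u) * indicator {\<epsilon>..a} u \<partial>lborel)"
    by (intro nn_integral_mono) (use pt eps in \<open>auto simp: indicator_def intro!: ennreal_leI\<close>)
  also have "\<dots> = ennreal (F a - F \<epsilon>)"
    using nn_integral_FTC_Icc[OF f2m dF f2nn] eps by simp
  also have "\<dots> \<le> ennreal ((2 + 3*S/(2*k* sqrt \<epsilon>) + (a-\<epsilon>))/(2* sqrt k))"
  proof (rule ennreal_leI)
    have bD: "\<bar>avg u (DD u)\<bar> \<le> S/(2* sqrt \<epsilon>) + k" if "\<epsilon> \<le> u" for u
    proof (rule avg_abs_le)
      fix x assume x: "x \<in> X"
      have su: "sqrt \<epsilon> \<le> sqrt u" "0 < sqrt \<epsilon>" using that eps by auto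
      have "\<bar>P x / (2 * sqrt u)\<bar> = \<bar>P x\<bar> / (2 * sqrt u)" using su by (simp add: abs_divide)
      also have "\<dots> \<le> S / (2 * sqrt u)" using PS[OF x] su by (intro divide_right_mono) auto
      also have "\<dots> \<le> S / (2 * sqrt \<epsilon>)" using su S0 by (intro divide_left_mono) auto
      finally show "\<bar>DD u x\<bar> \<le> S/(2* sqrt \<epsilon>) + k" unfolding DD_def using Qk[OF x] by linarith
    qed
    have "Psi a - Psi \<epsilon> \<le> 2*k + 3*S/(2* sqrt \<epsilon>)"
    proof -
      have "S / (2 * sqrt a) \<ge> 0" using S0 eps by simp
      then show ?thesis using bD[of a] bD[of \<epsilon>] eps unfolding Psi_def YY_avg by (auto simp: abs_le_iff)
    qed
    then have "(Psi a - Psi \<epsilon>) / (2*k* sqrt k) \<le> (2*k + 3*S/(2* sqrt \<epsilon>)) / (2*k* sqrt k)"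
      using k sk by (intro divide_right_mono) auto
    also have "(2*k + 3*S/(2* sqrt \<epsilon>)) / (2*k* sqrt k) = (2 + 3*S/(2*k* sqrt \<epsilon>)) / (2* sqrt k)"
      using k sk eps by (simp add: field_simps)
    finally show "F a - F \<epsilon> \<le> (2 + 3*S/(2*k* sqrt \<epsilon>) + (a-\<epsilon>))/(2* sqrt k)"
      unfolding F_def by (simp add: add_divide_distrib diff_divide_distrib)
  qed
  finally show ?thesis .
qed

end


lemma sets_std_gauss[measurable_cong, simp]: "sets std_gauss = sets borel"
  unfolding std_gauss_def by simp

lemma comp_meas[measurable]: "k \<in> I \<Longrightarrow> (\<lambda>x. x k) \<in> borel_measurable (PiM I (\<lambda>_. std_gauss))"
  using measurable_component_singleton[of k I "\<lambda>_. std_gauss"] by (simp add: measurable_def)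

lemma t1: "(\<lambda>h. \<Sum>k<K. h k) \<in> borel_measurable (PiM {..<K} (\<lambda>_. std_gauss))"
  by measurable
lemma t2: "(\<lambda>s. \<Sum>i<N. \<Sum>k<K. s (i,k)) \<in> borel_measurable (PiM ({..<N} \<times> {..<K}) (\<lambda>_. std_gauss))"
  by measurable
lemma t4: "(\<lambda>p. \<Sum>x\<in>configs K. exp (fst p * x 0)) \<in> borel_measurable (lborel \<Otimes>\<^sub>M (lborel::real measure))"
  by measurable

lemma meas_G:
  fixes K N :: nat and Bt lt \<epsilon> a :: real
  shows "(\<lambda>(u, \<omega>). ennreal (case \<omega> of (n, w, h, s) \<Rightarrow> gibbs_avg K N Bt lt u n w h s
          (\<lambda>x. \<bar>L_obs K u h x - gibbs_avg K N Bt lt u n w h s (L_obs K u h)\<bar>)) * indicator {\<epsilon>..a} u)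
     \<in> borel_measurable (lborel \<Otimes>\<^sub>M data_measure K N)"
  unfolding gibbs_avg_def gibbs_weight_def h_u_def L_obs_def data_measure_def gauss_vec_def gauss_mat_def
  by measurable

lemma prob_std_gauss: "prob_space std_gauss"
  unfolding std_gauss_def by (rule prob_space_normal_density) simp

lemma prob_gauss_vec: "prob_space (gauss_vec n)"
  unfolding gauss_vec_def by (rule prob_space_PiM) (rule prob_std_gauss)

lemma prob_gauss_mat: "prob_space (gauss_mat N K)"
  unfolding gauss_mat_def by (rule prob_space_PiM) (rule prob_std_gauss)

lemma nn_snd:
  assumes "prob_space M1" "prob_space M2" and g[measurable]: "g \<in> borel_measurable M2"
  shows "(\<integral>\<^sup>+\<omega>. g (snd \<omega>) \<partial>(M1 \<Otimes>\<^sub>M M2)) = (\<integral>\<^sup>+y. g y \<partial>M2)"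
proof -
  interpret p1: prob_space M1 by fact
  interpret p2: prob_space M2 by fact
  have "(\<integral>\<^sup>+\<omega>. g (snd \<omega>) \<partial>(M1 \<Otimes>\<^sub>M M2)) = (\<integral>\<^sup>+x. \<integral>\<^sup>+y. g (snd (x, y)) \<partial>M2 \<partial>M1)"
    by (rule p2.nn_integral_fst[symmetric]) measurable
  also have "\<dots> = (\<integral>\<^sup>+y. g y \<partial>M2)" by (simp add: p1.emeasure_space_1)
  finally show ?thesis .
qed

lemma nn_fst:
  assumes "prob_space M1" "prob_space M2" and g[measurable]: "g \<in> borel_measurable M1"
  shows "(\<integral>\<^sup>+\<omega>. g (fst \<omega>) \<partial>(M1 \<Otimes>\<^sub>M M2)) = (\<integral>\<^sup>+y. g y \<partial>M1)"
proof -
  interpret p2: prob_space M2 by fact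
  have "(\<integral>\<^sup>+y. g y \<partial>M1) = (\<integral>\<^sup>+y. g y \<partial>(distr (M1 \<Otimes>\<^sub>M M2) M1 fst))"
    by (simp add: p2.distr_pair_fst)
  also have "\<dots> = (\<integral>\<^sup>+\<omega>. g (fst \<omega>) \<partial>(M1 \<Otimes>\<^sub>M M2))"
    by (rule nn_integral_distr) auto
  finally show ?thesis by simp
qed

lemma E_abs_std: "(\<integral>\<^sup>+x. ennreal \<bar>x\<bar> \<partial>std_gauss) \<le> 1"
proof -
  have "(\<integral>\<^sup>+x. ennreal \<bar>x\<bar> \<partial>std_gauss) = (\<integral>\<^sup>+x. ennreal (std_normal_density x) * ennreal \<bar>x\<bar> \<partial>lborel)"
    unfolding std_gauss_def by (rule nn_integral_density) auto
  also have "\<dots> = (\<integral>\<^sup>+x. ennreal (std_normal_density x * \<bar>x\<bar>) \<partial>lborel)"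
    by (intro nn_integral_cong) (simp add: ennreal_mult normal_density_nonneg)
  also have "\<dots> = ennreal (sqrt (2/pi))"
  proof -
    have hb: "has_bochner_integral lborel (\<lambda>x. std_normal_density x * \<bar>x\<bar>) (sqrt (2/pi))"
      using std_normal_moment_abs_odd[of 0] by simp
    show ?thesis
      using hb by (subst nn_integral_eq_integral) (auto simp: has_bochner_integral_iff normal_density_nonneg)
  qed
  also have "\<dots> \<le> 1"
  proof -
    have "2/pi \<le> 1" using pi_gt3 by simp
    then show ?thesis by (simp add: real_sqrt_le_1_iff)
  qed
  finally show ?thesis .
qed

lemma E_abs_h:
  assumes k: "k < K"
  shows "(\<integral>\<^sup>+\<omega>. ennreal \<bar>fst (snd (snd \<omega>)) k\<bar> \<partial>data_measure K N) \<le> 1"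
proof -
  have m0: "(\<lambda>h. h k) \<in> borel_measurable (gauss_vec K)"
    unfolding gauss_vec_def using k by (intro comp_meas) simp
  have pv: "prob_space (gauss_vec K)" "prob_space (gauss_vec N)" "prob_space (gauss_mat N K)"
    by (simp_all add: prob_gauss_vec prob_gauss_mat)
  have pp: "prob_space (gauss_vec K \<Otimes>\<^sub>M gauss_mat N K)" using pv by (intro prob_space_pair)
  have ppp: "prob_space (gauss_vec K \<Otimes>\<^sub>M (gauss_vec K \<Otimes>\<^sub>M gauss_mat N K))" using pv pp by (intro prob_space_pair)
  have ea: "(\<lambda>x::real. ennreal \<bar>x\<bar>) \<in> borel_measurable borel" by measurable
  have g3: "(\<lambda>h. ennreal \<bar>h k\<bar>) \<in> borel_measurable (gauss_vec K)"
    by (rule measurable_compose[OF m0 ea])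
  have g2: "(\<lambda>r. ennreal \<bar>fst r k\<bar>) \<in> borel_measurable (gauss_vec K \<Otimes>\<^sub>M gauss_mat N K)"
    by (rule measurable_compose[OF measurable_fst g3])
  have g1: "(\<lambda>r. ennreal \<bar>fst (snd r) k\<bar>) \<in> borel_measurable (gauss_vec K \<Otimes>\<^sub>M (gauss_vec K \<Otimes>\<^sub>M gauss_mat N K))"
    by (rule measurable_compose[OF measurable_snd g2])
  have "(\<integral>\<^sup>+\<omega>. ennreal \<bar>fst (snd (snd \<omega>)) k\<bar> \<partial>data_measure K N)
      = (\<integral>\<^sup>+r. ennreal \<bar>fst (snd r) k\<bar> \<partial>(gauss_vec K \<Otimes>\<^sub>M (gauss_vec K \<Otimes>\<^sub>M gauss_mat N K)))"
    unfolding data_measure_def using nn_snd[OF pv(2) ppp g1] by simp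
  also have "\<dots> = (\<integral>\<^sup>+r. ennreal \<bar>fst r k\<bar> \<partial>(gauss_vec K \<Otimes>\<^sub>M gauss_mat N K))"
    using nn_snd[OF pv(1) pp g2] by simp
  also have "\<dots> = (\<integral>\<^sup>+h. ennreal \<bar>h k\<bar> \<partial>gauss_vec K)"
    using nn_fst[OF pv(1) pv(3) g3] by simp
  also have "\<dots> = (\<integral>\<^sup>+x. ennreal \<bar>x\<bar> \<partial>std_gauss)"
  proof -
    have T: "(\<lambda>h. h k) \<in> measurable (gauss_vec K) std_gauss"
      unfolding gauss_vec_def using k by (intro measurable_component_singleton) simp
    have D: "distr (gauss_vec K) std_gauss (\<lambda>h. h k) = std_gauss"
      unfolding gauss_vec_def using k by (intro distr_PiM_component prob_std_gauss) auto
    have ea': "(\<lambda>x::real. ennreal \<bar>x\<bar>) \<in> borel_measurable (distr (gauss_vec K) std_gauss (\<lambda>h. h k))"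
      unfolding D by (subst measurable_cong_sets[OF sets_std_gauss refl]) (rule ea)
    show ?thesis using nn_integral_distr[OF T ea'] unfolding D by simp
  qed
  finally show ?thesis using E_abs_std by simp
qed

lemma bochner_le_nn:
  assumes "\<And>x. 0 \<le> f x"
  shows "ennreal (integral\<^sup>L M f) \<le> (\<integral>\<^sup>+x. ennreal (f x) \<partial>M)"
proof (cases "integrable M f")
  case True
  then show ?thesis using assms by (subst nn_integral_eq_integral) auto
next
  case False
  then show ?thesis by (simp add: not_integrable_integral_eq)
qed


lemma omega_bound:
  fixes K N :: nat and Bt lt \<epsilon> a :: real
  assumes K: "K \<ge> 1" and eps: "0 < \<epsilon>" "\<epsilon> < a"
  shows "(\<integral>\<^sup>+u. ennreal (gibbs_avg K N Bt lt u n w h s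
          (\<lambda>x. \<bar>L_obs K u h x - gibbs_avg K N Bt lt u n w h s (L_obs K u h)\<bar>)) * indicator {\<epsilon>..a} u \<partial>lborel)
     \<le> ennreal ((2 + 3*(\<Sum>k<K. \<bar>h k\<bar>)/(2*real K* sqrt \<epsilon>) + (a-\<epsilon>))/(2* sqrt (real K)))"
proof -
  define X where "X = configs K"
  define A where "A x = - (1/2) * (\<Sum>i<N. (n i + sqrt Bt / sqrt (real N) * (\<Sum>k<K. s (i, k) * (1 - x k)))\<^sup>2)
          - (1/2) * (\<Sum>k<K. (w k + sqrt lt * (1 - x k))\<^sup>2)" for x :: "nat \<Rightarrow> real"
  define P where "P x = (\<Sum>k<K. h k * x k)" for x :: "nat \<Rightarrow> real"
  define Q where "Q x = (\<Sum>k<K. x k)" for x :: "nat \<Rightarrow> real"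
  define S where "S = (\<Sum>k<K. \<bar>h k\<bar>)"
  have fin: "finite X" unfolding X_def configs_def by (rule finite_PiE) auto
  have ne: "X \<noteq> {}"
  proof -
    have "(\<lambda>k. if k < K then 1 else undefined) \<in> X" unfolding X_def configs_def by (auto simp: PiE_def extensional_def)
    then show ?thesis by auto
  qed
  have gav: "gibbs_avg K N Bt lt u n w h s f = avg X A P Q S u f" for u f
    by (simp only: avg_def[OF fin ne] ZZ_def[OF fin ne] ww_def[OF fin ne])
       (simp add: gibbs_avg_def gibbs_weight_def h_u_def A_def P_def Q_def S_def X_def)
  have Lf: "L_obs K u h = (\<lambda>x. (1/real K)*(1/(2* sqrt u))*P x + (1/real K)*Q x)" for u
    unfolding L_obs_def P_def Q_def by (rule ext) simp
  have xk: "\<bar>x k\<bar> = 1" if "x \<in> X" "k < K" for x k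
  proof -
    have "x k \<in> {-1, 1}" using that unfolding X_def configs_def by (intro PiE_mem[of x "{..<K}"]) auto
    then show ?thesis by auto
  qed
  have PS: "\<bar>P x\<bar> \<le> S" if x: "x \<in> X" for x
  proof -
    have "\<bar>P x\<bar> \<le> (\<Sum>k<K. \<bar>h k * x k\<bar>)" unfolding P_def by (rule sum_abs)
    also have "\<dots> = S" unfolding S_def using xk[OF x] by (intro sum.cong) (auto simp: abs_mult)
    finally show ?thesis .
  qed
  have QK: "\<bar>Q x\<bar> \<le> real K" if x: "x \<in> X" for x
  proof -
    have "\<bar>Q x\<bar> \<le> (\<Sum>k<K. \<bar>x k\<bar>)" unfolding Q_def by (rule sum_abs)
    also have "\<dots> = real K" using xk[OF x] by simp
    finally show ?thesis .
  qed
  have Kp: "0 < real K" using K by simp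
  note CI = core_integral[OF fin ne PS QK Kp eps, where A=A]
  show ?thesis
    unfolding gav Lf S_def[symmetric] by (rule CI)
qed

lemma gibbs_avg_nonneg:
  "(\<And>x. 0 \<le> f x) \<Longrightarrow> 0 \<le> gibbs_avg K N Bt lt u n w h s f"
  unfolding gibbs_avg_def gibbs_weight_def by (intro divide_nonneg_nonneg sum_nonneg mult_nonneg_nonneg) auto

lemma E_bound:
  fixes K N :: nat and c0 c1 :: real
  assumes c: "0 \<le> c0" "0 \<le> c1"
  shows "(\<integral>\<^sup>+\<omega>. ennreal (c0 + c1 * (\<Sum>k<K. \<bar>fst (snd (snd \<omega>)) k\<bar>)) \<partial>data_measure K N) \<le> ennreal (c0 + c1 * real K)"
proof -
  interpret D: prob_space "data_measure K N"
    unfolding data_measure_def by (intro prob_space_pair prob_gauss_vec prob_gauss_mat)+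
  have mk: "(\<lambda>\<omega>. ennreal \<bar>fst (snd (snd \<omega>)) k\<bar>) \<in> borel_measurable (data_measure K N)" if "k < K" for k
  proof -
    have m0: "(\<lambda>h. h k) \<in> borel_measurable (gauss_vec K)"
      unfolding gauss_vec_def using that by (intro comp_meas) simp
    have ea: "(\<lambda>x::real. ennreal \<bar>x\<bar>) \<in> borel_measurable borel" by measurable
    show ?thesis unfolding data_measure_def
      by (rule measurable_compose[OF measurable_snd measurable_compose[OF measurable_snd
             measurable_compose[OF measurable_fst measurable_compose[OF m0 ea]]]])
  qed
  have "(\<integral>\<^sup>+\<omega>. ennreal (c0 + c1 * (\<Sum>k<K. \<bar>fst (snd (snd \<omega>)) k\<bar>)) \<partial>data_measure K N)
      = (\<integral>\<^sup>+\<omega>. ennreal c0 + ennreal c1 * (\<Sum>k<K. ennreal \<bar>fst (snd (snd \<omega>)) k\<bar>) \<partial>data_measure K N)"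
  proof (rule nn_integral_cong)
    fix \<omega> :: "(nat \<Rightarrow> real) \<times> (nat \<Rightarrow> real) \<times> (nat \<Rightarrow> real) \<times> (nat \<times> nat \<Rightarrow> real)"
    define T where "T = (\<Sum>k<K. \<bar>fst (snd (snd \<omega>)) k\<bar>)"
    have T0: "0 \<le> T" unfolding T_def by (rule sum_nonneg) simp
    have e1: "(\<Sum>k<K. ennreal \<bar>fst (snd (snd \<omega>)) k\<bar>) = ennreal T"
      unfolding T_def by (rule sum_ennreal) simp
    have e2: "ennreal (c0 + c1 * T) = ennreal c0 + ennreal c1 * ennreal T"
      using c T0 by (simp add: ennreal_plus ennreal_mult)
    show "ennreal (c0 + c1 * (\<Sum>k<K. \<bar>fst (snd (snd \<omega>)) k\<bar>)) = ennreal c0 + ennreal c1 * (\<Sum>k<K. ennreal \<bar>fst (snd (snd \<omega>)) k\<bar>)"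
      unfolding e1 T_def[symmetric] by (rule e2)
  qed
  also have "\<dots> = ennreal c0 + ennreal c1 * (\<Sum>k<K. \<integral>\<^sup>+\<omega>. ennreal \<bar>fst (snd (snd \<omega>)) k\<bar> \<partial>data_measure K N)"
  proof -
    have ms: "(\<lambda>\<omega>. \<Sum>k<K. ennreal \<bar>fst (snd (snd \<omega>)) k\<bar>) \<in> borel_measurable (data_measure K N)"
      by (rule borel_measurable_sum, rule mk, simp)
    have mc: "(\<lambda>\<omega>. ennreal c1 * (\<Sum>k<K. ennreal \<bar>fst (snd (snd \<omega>)) k\<bar>)) \<in> borel_measurable (data_measure K N)"
      using ms by (rule borel_measurable_times_ennreal[OF borel_measurable_const])
    have "(\<integral>\<^sup>+\<omega>. ennreal c0 + ennreal c1 * (\<Sum>k<K. ennreal \<bar>fst (snd (snd \<omega>)) k\<bar>) \<partial>data_measure K N)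
        = (\<integral>\<^sup>+\<omega>. ennreal c0 \<partial>data_measure K N) + (\<integral>\<^sup>+\<omega>. ennreal c1 * (\<Sum>k<K. ennreal \<bar>fst (snd (snd \<omega>)) k\<bar>) \<partial>data_measure K N)"
      by (rule nn_integral_add[OF borel_measurable_const mc])
    also have "(\<integral>\<^sup>+\<omega>. ennreal c1 * (\<Sum>k<K. ennreal \<bar>fst (snd (snd \<omega>)) k\<bar>) \<partial>data_measure K N)
       = ennreal c1 * (\<integral>\<^sup>+\<omega>. (\<Sum>k<K. ennreal \<bar>fst (snd (snd \<omega>)) k\<bar>) \<partial>data_measure K N)"
      by (rule nn_integral_cmult[OF ms])
    also have "(\<integral>\<^sup>+\<omega>. (\<Sum>k<K. ennreal \<bar>fst (snd (snd \<omega>)) k\<bar>) \<partial>data_measure K N)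
       = (\<Sum>k<K. \<integral>\<^sup>+\<omega>. ennreal \<bar>fst (snd (snd \<omega>)) k\<bar> \<partial>data_measure K N)"
      by (rule nn_integral_sum, rule mk, simp)
    finally show ?thesis by (simp add: D.emeasure_space_1)
  qed
  also have "\<dots> \<le> ennreal c0 + ennreal c1 * (\<Sum>k<K. 1)"
    using E_abs_h by (intro add_left_mono mult_left_mono sum_mono) auto
  also have "\<dots> = ennreal (c0 + c1 * real K)"
    using c by (simp add: ennreal_mult ennreal_of_nat_eq_real_of_nat)
  finally show ?thesis .
qed


lemma main_bound:
  fixes K N :: nat and Bt lt \<epsilon> a :: real
  assumes K: "K \<ge> 1" and eps: "0 < \<epsilon>" "\<epsilon> < a"
  shows "\<bar>LBINT u=\<epsilon>..a. fluct K N Bt lt u\<bar> \<le> ((2 + 3/(2* sqrt \<epsilon>) + (a-\<epsilon>))/2) / sqrt (real K)"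
proof -
  interpret D: prob_space "data_measure K N"
    unfolding data_measure_def by (intro prob_space_pair prob_gauss_vec prob_gauss_mat)+
  interpret PS: pair_sigma_finite lborel "data_measure K N"
    by (intro pair_sigma_finite.intro lborel.sigma_finite_measure_axioms D.sigma_finite_measure_axioms)
  define G where "G u = (\<lambda>(n, w, h, s). gibbs_avg K N Bt lt u n w h s
          (\<lambda>x. \<bar>L_obs K u h x - gibbs_avg K N Bt lt u n w h s (L_obs K u h)\<bar>))" for u
  define fl where "fl u = fluct K N Bt lt u" for u
  define ind where "ind u = (indicator {\<epsilon>..a} u :: ennreal)" for u
  define c0 where "c0 = (2 + (a-\<epsilon>))/(2 * sqrt (real K))"
  define c1 where "c1 = 3/(2*real K * sqrt \<epsilon>)/(2 * sqrt (real K))"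
  have Kp: "0 < real K" using K by simp
  have c0: "0 \<le> c0" unfolding c0_def using eps Kp by simp
  have c1: "0 \<le> c1" unfolding c1_def using eps Kp by simp
  have Gnn: "0 \<le> G u \<omega>" for u \<omega>
    unfolding G_def by (cases \<omega>) (auto intro!: gibbs_avg_nonneg)
  have fleq: "fl u = integral\<^sup>L (data_measure K N) (G u)" for u
    unfolding fl_def fluct_def G_def ..
  have flnn: "0 \<le> fl u" for u
    unfolding fleq using Gnn by (intro integral_nonneg_AE) auto
  have fle: "ennreal (fl u) \<le> (\<integral>\<^sup>+\<omega>. ennreal (G u \<omega>) \<partial>data_measure K N)" for u
    unfolding fleq by (rule bochner_le_nn) (rule Gnn)
  have LB: "(LBINT u=\<epsilon>..a. fluct K N Bt lt u) = integral\<^sup>L lborel (\<lambda>u. indicator {\<epsilon>..a} u * fl u)"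
    using eps by (simp add: interval_integral_Icc set_lebesgue_integral_def fl_def)
  have Inn: "0 \<le> integral\<^sup>L lborel (\<lambda>u. indicator {\<epsilon>..a} u * fl u)"
    using flnn by (intro integral_nonneg_AE) auto
  have meas: "(\<lambda>(u, \<omega>). ennreal (G u \<omega>) * ind u) \<in> borel_measurable (lborel \<Otimes>\<^sub>M data_measure K N)"
    unfolding G_def ind_def by (rule meas_G)
  have "ennreal (integral\<^sup>L lborel (\<lambda>u. indicator {\<epsilon>..a} u * fl u)) \<le> (\<integral>\<^sup>+u. ennreal (indicator {\<epsilon>..a} u * fl u) \<partial>lborel)"
    by (rule bochner_le_nn) (simp add: flnn)
  also have "\<dots> = (\<integral>\<^sup>+u. ennreal (fl u) * ind u \<partial>lborel)"
    by (intro nn_integral_cong) (simp add: ind_def indicator_def)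
  also have "\<dots> \<le> (\<integral>\<^sup>+u. (\<integral>\<^sup>+\<omega>. ennreal (G u \<omega>) \<partial>data_measure K N) * ind u \<partial>lborel)"
    by (intro nn_integral_mono mult_right_mono fle) simp
  also have "\<dots> = (\<integral>\<^sup>+u. (\<integral>\<^sup>+\<omega>. ennreal (G u \<omega>) * ind u \<partial>data_measure K N) \<partial>lborel)"
    by (intro nn_integral_cong) (simp add: ind_def indicator_def)
  also have "\<dots> = (\<integral>\<^sup>+\<omega>. (\<integral>\<^sup>+u. ennreal (G u \<omega>) * ind u \<partial>lborel) \<partial>data_measure K N)"
    by (rule PS.Fubini'[OF meas, symmetric])
  also have "\<dots> \<le> (\<integral>\<^sup>+\<omega>. ennreal (c0 + c1 * (\<Sum>k<K. \<bar>fst (snd (snd \<omega>)) k\<bar>)) \<partial>data_measure K N)"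
  proof (rule nn_integral_mono)
    fix \<omega> :: "(nat \<Rightarrow> real) \<times> (nat \<Rightarrow> real) \<times> (nat \<Rightarrow> real) \<times> (nat \<times> nat \<Rightarrow> real)"
    obtain n w h s where om: "\<omega> = (n, w, h, s)" by (cases \<omega>) auto
    have "(\<integral>\<^sup>+u. ennreal (G u \<omega>) * ind u \<partial>lborel)
       \<le> ennreal ((2 + 3*(\<Sum>k<K. \<bar>h k\<bar>)/(2*real K* sqrt \<epsilon>) + (a-\<epsilon>))/(2* sqrt (real K)))"
      unfolding om G_def ind_def using omega_bound[OF K eps, of N Bt lt n w h s] by simp
    also have "(2 + 3*(\<Sum>k<K. \<bar>h k\<bar>)/(2*real K* sqrt \<epsilon>) + (a-\<epsilon>))/(2* sqrt (real K))
        = c0 + c1 * (\<Sum>k<K. \<bar>fst (snd (snd \<omega>)) k\<bar>)"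
      unfolding om c0_def c1_def using Kp eps by (simp add: field_simps)
    finally show "(\<integral>\<^sup>+u. ennreal (G u \<omega>) * ind u \<partial>lborel) \<le> ennreal (c0 + c1 * (\<Sum>k<K. \<bar>fst (snd (snd \<omega>)) k\<bar>))" .
  qed
  also have "\<dots> \<le> ennreal (c0 + c1 * real K)" by (rule E_bound[OF c0 c1])
  also have "c0 + c1 * real K = ((2 + 3/(2* sqrt \<epsilon>) + (a-\<epsilon>))/2) / sqrt (real K)"
    unfolding c0_def c1_def using Kp eps by (simp add: field_simps)
  finally have "integral\<^sup>L lborel (\<lambda>u. indicator {\<epsilon>..a} u * fl u) \<le> ((2 + 3/(2* sqrt \<epsilon>) + (a-\<epsilon>))/2) / sqrt (real K)"
    using eps Kp by (subst (asm) ennreal_le_iff) auto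
  then show ?thesis unfolding LB using Inn by simp
qed


theorem lemma5:
  fixes \<beta> \<sigma> m \<epsilon> a t :: real
    and Bf lf :: "real \<Rightarrow> real"
  assumes beta_pos: "\<beta> > 0"
    and sigma_pos: "\<sigma> > 0"
    and m_range: "0 \<le> m" "m \<le> 1"
    and C1: "C1_on {0..1} Bf" "C1_on {0..1} lf"
    and B0: "Bf 0 = 0" and l0: "lf 0 = (1/\<sigma>\<^sup>2) / (1 + \<beta> * (1/\<sigma>\<^sup>2) * (1 - m))"
    and B1: "Bf 1 = 1/\<sigma>\<^sup>2" and l1: "lf 1 = 0"
    and B_incr: "mono_on {0..1} Bf"
    and l_decr: "antimono_on {0..1} lf"
    and constraint: "\<And>s. s \<in> {0..1} \<Longrightarrow>
        Bf s / (1 + \<beta> * Bf s * (1 - m)) + lf s = (1/\<sigma>\<^sup>2) / (1 + \<beta> * (1/\<sigma>\<^sup>2) * (1 - m))"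
    and eps: "0 < \<epsilon>" "\<epsilon> < a"
    and t_range: "t \<in> {0..1}"
  shows "\<exists>C K0. \<forall>K N. K \<ge> K0 \<longrightarrow> real K = \<beta> * real N \<longrightarrow>
            \<bar>LBINT u=\<epsilon>..a. fluct K N (Bf t) (lf t) u\<bar> \<le> C / sqrt (real K)"
  proof -
  have "\<forall>K N. K \<ge> 1 \<longrightarrow> real K = \<beta> * real N \<longrightarrow>
            \<bar>LBINT u=\<epsilon>..a. fluct K N (Bf t) (lf t) u\<bar> \<le> ((2 + 3/(2* sqrt \<epsilon>) + (a-\<epsilon>))/2) / sqrt (real K)"
    using main_bound eps by blast
  then show ?thesis by blast
qed

end
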